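(* Let $\mathcal V=\mathbb R^d$ with the Euclidean norm, and fix $r>0$ and an integer $\tau\ge0$. Consider linear losses $f_t(x)=\langle g_t,x\rangle$ with uniform delay $\tau$ ($\mathcal S_t=\{1,\dots,t-\tau-1\}$), and run DODA with guesses $\tilde g_{t+1/2}=g_{t-\tau-1}$ and constant learning rates $\eta,\gamma$, where $\eta=\eta(r,T,\tau,V^{\tau+1}_T)$ is uniquely determined by $r$, the horizon $T$, $\tau$ and $V^{\tau+1}_T$, and $\gamma\le\tau\eta$. Then it is impossible to guarantee a regret in $o(\max(V^{\tau+1}_T,\sqrt T))$: it is not true that for every $\varepsilon>0$ there exists $N$ such that, for every instance (horizon $T$, linear losses, initial point $x_1$, comparator $p$ with $\|p-x_1\|\le r$) with $\max(V^{\tau+1}_T,\sqrt T)\ge N$, the regret satisfies $R_T(p)\le\varepsilon\max(V^{\tau+1}_T,\sqrt T)$.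
   Context: DODA (unconstrained Euclidean): given $x_1$, $x_t=x_1-\eta\sum_{s\in\mathcal S_t}g_{s+1/2}$ and $x_{t+1/2}=x_t-\gamma\tilde g_{t+1/2}$; the played point at round $t$ is $x_{t+1/2}$, with feedback $g_{t+1/2}=\nabla f_t(x_{t+1/2})$, which for linear losses equals $g_t$. Regret: $R_T(p)=\sum_{t=1}^Tf_t(x_{t+1/2})-\sum_{t=1}^Tf_t(p)$. Convention $g_t=0$ for $t\le0$. $(\tau+1)$-variation: $V^{\tau+1}_T=\sum_{t=1}^T\|g_t-g_{t-\tau-1}\|^2$. *)

theory Defs
  imports "HOL-Analysis.Analysis"
begin

text \<open>Gradients g t for rounds t = 1,2,...; convention g t = 0 for t \<le> 0.
  The delayed gradient g_{t-tau-1} (zero when t - tau - 1 \<le> 0).\<close>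
definition delayed_grad :: "(nat \<Rightarrow> 'a::real_vector) \<Rightarrow> nat \<Rightarrow> nat \<Rightarrow> 'a" where
  "delayed_grad g tau t = (if tau + 1 < t then g (t - tau - 1) else 0)"

definition variation :: "(nat \<Rightarrow> 'a::real_normed_vector) \<Rightarrow> nat \<Rightarrow> nat \<Rightarrow> real" where
  "variation g tau T = (\<Sum>t = 1..T. (norm (g t - delayed_grad g tau t))\<^sup>2)"

text \<open>DODA base iterate with uniform delay: S_t = {1,...,t-tau-1} (empty if t \<le> tau+1),
  x_t = x_1 - eta * sum_{s in S_t} g_s  (for linear losses g_{s+1/2} = g_s).\<close>
definition doda_x :: "real \<Rightarrow> (nat \<Rightarrow> 'a::real_vector) \<Rightarrow> 'a \<Rightarrow> nat \<Rightarrow> nat \<Rightarrow> 'a" where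
  "doda_x eta g x1 tau t = x1 - eta *\<^sub>R (\<Sum>s \<in> {1..t - tau - 1}. g s)"

definition doda_play :: "real \<Rightarrow> real \<Rightarrow> (nat \<Rightarrow> 'a::real_vector) \<Rightarrow> 'a \<Rightarrow> nat \<Rightarrow> nat \<Rightarrow> 'a" where
  "doda_play eta gamma g x1 tau t = doda_x eta g x1 tau t - gamma *\<^sub>R delayed_grad g tau t"

definition doda_regret :: "real \<Rightarrow> real \<Rightarrow> (nat \<Rightarrow> 'a::real_inner) \<Rightarrow> 'a \<Rightarrow> nat \<Rightarrow> nat \<Rightarrow> 'a \<Rightarrow> real" where
  "doda_regret eta gamma g x1 tau T p =
     (\<Sum>t = 1..T. g t \<bullet> doda_play eta gamma g x1 tau t) - (\<Sum>t = 1..T. g t \<bullet> p)"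

end

theory Submission
  imports Defs
begin

lemma gauss_real: "(\<Sum>i=1..n. real i) = real n * (real n + 1) / 2"
  by (induction n) (auto simp: field_simps)

lemma gauss_real2: "(\<Sum>i=Suc 0..n. real i) = real n * (real n + 1) / 2"
  using gauss_real by simp

lemma split_ivl:
  fixes f :: "nat \<Rightarrow> real"
  assumes "a \<le> b" "b \<le> c"
  shows "(\<Sum>t\<in>{a<..c}. f t) = (\<Sum>t\<in>{a<..b}. f t) + (\<Sum>t\<in>{b<..c}. f t)"
proof -
  have "{a<..c} = {a<..b} \<union> {b<..c}" using assms by auto
  then show ?thesis by (simp add: sum.union_disjoint)
qed

lemma shift_ivl:
  fixes f :: "nat \<Rightarrow> real"
  shows "(\<Sum>t\<in>{a<..a+n}. f t) = (\<Sum>i=1..n. f (a+i))"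
proof -
  have "{a<..a+n} = {1+a..n+a}" by auto
  then show ?thesis using sum.shift_bounds_cl_nat_ivl[of f 1 a n] by (simp add: add.commute)
qed

lemma ind_sum:
  assumes "a \<le> b" "b \<le> T"
  shows "(\<Sum>t=1..T. if a < t \<and> t \<le> b then (c::real) else 0) = c * real (b - a)"
proof -
  have "(\<Sum>t=1..T. if a < t \<and> t \<le> b then (c::real) else 0) = (\<Sum>t\<in>{1..T} \<inter> {a<..b}. c)"
    by (simp add: sum.inter_filter[symmetric] Int_def)
  also have "{1..T} \<inter> {a<..b} = {a<..b}" using assms by auto
  finally show ?thesis by simp
qed

lemma scalar_regret:
  fixes e :: "'a::real_inner"
  assumes "e \<bullet> e = 1"
  shows "doda_regret eta gamma (\<lambda>t. a t *\<^sub>R e) 0 tau T (- (r' *\<^sub>R e)) =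
     (\<Sum>t=1..T. a t * (- (eta * (\<Sum>s=1..t-tau-1. a s)) - gamma * delayed_grad a tau t)) + r' * (\<Sum>t=1..T. a t)"
proof -
  have dg: "delayed_grad (\<lambda>t. a t *\<^sub>R e) tau t = delayed_grad a tau t *\<^sub>R e" for t
    by (simp add: delayed_grad_def)
  have pl: "doda_play eta gamma (\<lambda>t. a t *\<^sub>R e) 0 tau t =
      (- (eta * (\<Sum>s=1..t-tau-1. a s)) - gamma * delayed_grad a tau t) *\<^sub>R e" for t
    by (simp add: doda_play_def doda_x_def dg scaleR_sum_left[symmetric] algebra_simps)
  show ?thesis
    by (simp add: doda_regret_def pl assms sum_distrib_left sum.distrib[symmetric] algebra_simps) (intro sum.cong; simp)
qed

lemma scalar_variation:
  fixes e :: "'a::real_normed_vector"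
  assumes "norm e = 1"
  shows "variation (\<lambda>t. a t *\<^sub>R e) tau T = variation a tau T"
proof -
  have dg: "delayed_grad (\<lambda>t. a t *\<^sub>R e) tau t = delayed_grad a tau t *\<^sub>R e" for t
    by (simp add: delayed_grad_def)
  show ?thesis unfolding variation_def dg
    by (simp add: scaleR_diff_left[symmetric] assms del: scaleR_diff_left)
qed

definition seqA :: "nat \<Rightarrow> nat \<Rightarrow> real" where
  "seqA m t = (if t \<le> m then 1 else if t \<le> 2*m then -1 else 0)"

definition seqB :: "real \<Rightarrow> nat \<Rightarrow> nat \<Rightarrow> real" where
  "seqB c k t = (if t \<le> k then c else 0)"

lemma psA1: "j \<le> m \<Longrightarrow> (\<Sum>s=1..j. seqA m s) = real j"
  by (simp add: seqA_def)

lemma psA2: assumes "i \<le> m" shows "(\<Sum>s=1..m+i. seqA m s) = real m - real i"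
proof -
  have "(\<Sum>s=1..m+i. seqA m s) = (\<Sum>s\<in>{0<..m+i}. seqA m s)"
    by (rule sum.cong) auto
  also have "\<dots> = (\<Sum>s\<in>{0<..m}. seqA m s) + (\<Sum>s\<in>{m<..m+i}. seqA m s)"
    by (rule split_ivl) auto
  also have "(\<Sum>s\<in>{0<..m}. seqA m s) = real m"
    by (simp add: seqA_def)
  also have "(\<Sum>s\<in>{m<..m+i}. seqA m s) = (\<Sum>s\<in>{m<..m+i}. -1)"
    using assms by (intro sum.cong) (auto simp: seqA_def)
  finally show ?thesis by simp
qed

lemma psB: "j \<le> k \<Longrightarrow> (\<Sum>s=1..j. seqB c k s) = c * real j"
  by (simp add: seqB_def)

lemma varA:
  assumes "tau + 1 \<le> m" "2*m + tau + 1 \<le> T"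
  shows "variation (seqA m) tau T = 6 * (real tau + 1)"
proof -
  have pw: "(seqA m t - delayed_grad (seqA m) tau t)\<^sup>2 =
     (if 0 < t \<and> t \<le> 0 + (tau+1) then 1 else 0) + (if m < t \<and> t \<le> m + (tau+1) then 4 else 0)
     + (if 2*m < t \<and> t \<le> 2*m + (tau+1) then 1 else 0)" if "t \<in> {1..T}" for t
    using that assms by (auto simp: seqA_def delayed_grad_def)
  have "variation (seqA m) tau T = (\<Sum>t=1..T. (if 0 < t \<and> t \<le> 0 + (tau+1) then 1 else 0) + (if m < t \<and> t \<le> m + (tau+1) then 4 else 0)
     + (if 2*m < t \<and> t \<le> 2*m + (tau+1) then (1::real) else 0))"
    unfolding variation_def by (rule sum.cong) (use pw in auto)
  also have "\<dots> = 6 * (real tau + 1)"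
    unfolding sum.distrib using assms by (subst ind_sum ind_sum ind_sum, simp, simp)+ simp
  finally show ?thesis .
qed

lemma varB:
  assumes "tau + 1 \<le> k" "k + tau + 1 \<le> T"
  shows "variation (seqB c k) tau T = 2 * (real tau + 1) * c\<^sup>2"
proof -
  have pw: "(seqB c k t - delayed_grad (seqB c k) tau t)\<^sup>2 =
     (if 0 < t \<and> t \<le> 0 + (tau+1) then c\<^sup>2 else 0) + (if k < t \<and> t \<le> k + (tau+1) then c\<^sup>2 else 0)"
     if "t \<in> {1..T}" for t
    using that assms by (auto simp: seqB_def delayed_grad_def)
  have "variation (seqB c k) tau T = (\<Sum>t=1..T. (if 0 < t \<and> t \<le> 0 + (tau+1) then c\<^sup>2 else 0) + (if k < t \<and> t \<le> k + (tau+1) then c\<^sup>2 else 0))"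
    unfolding variation_def by (rule sum.cong) (use pw in auto)
  also have "\<dots> = 2 * (real tau + 1) * c\<^sup>2"
    unfolding sum.distrib using assms by (subst ind_sum ind_sum, simp, simp)+ (simp add: algebra_simps)
  finally show ?thesis .
qed

lemma learnA:
  assumes mn: "m = n + tau + 1" and T: "2*m \<le> T" and eta: "eta > 0"
    and g0: "0 \<le> gamma" and g1: "gamma \<le> real tau * eta"
  shows "(\<Sum>t=1..T. seqA m t * (- (eta * (\<Sum>s=1..t-tau-1. seqA m s)) - gamma * delayed_grad (seqA m) tau t))
          \<ge> eta * real m"
proof -
  define F where "F t = seqA m t * (- (eta * (\<Sum>s=1..t-tau-1. seqA m s)) - gamma * delayed_grad (seqA m) tau t)" for t
  have "(\<Sum>t=1..T. F t) = (\<Sum>t\<in>{0<..T}. F t)" by (rule sum.cong) auto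
  also have "\<dots> = (\<Sum>t\<in>{0<..tau+1}. F t) + (\<Sum>t\<in>{tau+1<..m}. F t) + (\<Sum>t\<in>{m<..m+tau+1}. F t)
      + (\<Sum>t\<in>{m+tau+1<..2*m}. F t) + (\<Sum>t\<in>{2*m<..T}. F t)"
  proof -
    have s1: "sum F {0<..T} = sum F {0<..tau+1} + sum F {tau+1<..T}" by (rule split_ivl) (use mn T in auto)
    have s2: "sum F {tau+1<..T} = sum F {tau+1<..m} + sum F {m<..T}" by (rule split_ivl) (use mn T in auto)
    have s3: "sum F {m<..T} = sum F {m<..m+tau+1} + sum F {m+tau+1<..T}" by (rule split_ivl) (use mn T in auto)
    have s4: "sum F {m+tau+1<..T} = sum F {m+tau+1<..2*m} + sum F {2*m<..T}" by (rule split_ivl) (use mn T in auto)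
    show ?thesis using s1 s2 s3 s4 by linarith
  qed
  also have "(\<Sum>t\<in>{0<..tau+1}. F t) = 0"
    by (rule sum.neutral) (auto simp: F_def delayed_grad_def)
  also have "(\<Sum>t\<in>{2*m<..T}. F t) = 0"
    by (rule sum.neutral) (auto simp: F_def seqA_def)
  also have "(\<Sum>t\<in>{tau+1<..m}. F t) = (\<Sum>i=1..n. F (tau+1+i))"
    using shift_ivl[of F "tau+1" n] mn by (simp add: add.commute add.left_commute)
  also have "\<dots> = (\<Sum>i=1..n. - eta * real i - gamma)"
  proof (rule sum.cong)
    fix i assume i: "i \<in> {1..n}"
    have "F (tau+1+i) = 1 * (- (eta * real i) - gamma * 1)"
      unfolding F_def using i mn by (simp add: psA1 delayed_grad_def seqA_def)
    then show "F (tau+1+i) = - eta * real i - gamma" by simp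
  qed simp
  also have "(\<Sum>t\<in>{m<..m+tau+1}. F t) = (\<Sum>i=1..tau+1. F (m+i))"
    using shift_ivl[of F m "tau+1"] by (simp add: add.assoc)
  also have "\<dots> = (\<Sum>i=1..tau+1. eta * (real n + real i) + gamma)"
  proof (rule sum.cong)
    fix i assume i: "i \<in> {1..tau+1}"
    have e: "m + i - tau - 1 = n + i" using mn by simp
    have "F (m+i) = (-1) * (- (eta * real (n+i)) - gamma * 1)"
      unfolding F_def e using i mn by (simp add: psA1 delayed_grad_def seqA_def)
    then show "F (m+i) = eta * (real n + real i) + gamma" by simp
  qed simp
  also have "(\<Sum>t\<in>{m+tau+1<..2*m}. F t) = (\<Sum>i=1..n. F (m+tau+1+i))"
  proof -
    have e2: "2*m = m+tau+1+n" using mn by simp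
    show ?thesis unfolding e2 by (rule shift_ivl)
  qed
  also have "\<dots> = (\<Sum>i=1..n. eta * (real m - real i) - gamma)"
  proof (rule sum.cong)
    fix i assume i: "i \<in> {1..n}"
    have e: "m + tau + 1 + i - tau - 1 = m + i" by simp
    have a1: "seqA m (m+tau+1+i) = -1" using i mn by (simp add: seqA_def)
    have a2: "delayed_grad (seqA m) tau (m+tau+1+i) = -1" using i mn by (simp add: seqA_def delayed_grad_def)
    have a3: "(\<Sum>s=1..m+i. seqA m s) = real m - real i" using i mn by (intro psA2) simp
    have "F (m+tau+1+i) = (-1) * (- (eta * (real m - real i)) - gamma * (-1))"
      unfolding F_def e a1 a2 a3 by simp
    then show "F (m+tau+1+i) = eta * (real m - real i) - gamma" by simp
  qed simp
  finally have eq: "(\<Sum>t=1..T. F t) = (\<Sum>i=1..n. - eta * real i - gamma) + (\<Sum>i=1..tau+1. eta * (real n + real i) + gamma)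
      + (\<Sum>i=1..n. eta * (real m - real i) - gamma)" by simp
  also have "\<dots> = - eta * (real n * (real n + 1) / 2) - real n * gamma
      + (eta * (real tau + 1) * real n + eta * ((real tau + 1) * (real tau + 2) / 2) + (real tau + 1) * gamma)
      + (eta * real n * real m - eta * (real n * (real n + 1) / 2) - real n * gamma)"
  proof -
    have h1: "(\<Sum>i=1..n. - eta * real i - gamma) = - eta * (real n * (real n + 1) / 2) - real n * gamma"
      by (simp add: sum_subtractf sum_negf sum_distrib_left[symmetric] gauss_real gauss_real2)
    have h2: "(\<Sum>i=1..tau+1. eta * (real n + real i) + gamma) = eta * (real tau + 1) * real n + eta * ((real tau + 1) * (real tau + 2) / 2) + (real tau + 1) * gamma"
    proof -
      have "(\<Sum>i=1..tau+1. eta * (real n + real i) + gamma) = (\<Sum>i=1..tau+1. eta * real n + gamma) + eta * (\<Sum>i=1..tau+1. real i)"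
        by (simp add: sum.distrib sum_distrib_left algebra_simps)
      also have "\<dots> = (real tau + 1) * (eta * real n + gamma) + eta * ((real tau + 1) * (real tau + 2) / 2)"
        by (subst gauss_real gauss_real2) (simp add: algebra_simps)
      finally show ?thesis by (simp add: algebra_simps)
    qed
    have h3: "(\<Sum>i=1..n. eta * (real m - real i) - gamma) = eta * real n * real m - eta * (real n * (real n + 1) / 2) - real n * gamma"
    proof -
      have "(\<Sum>i=1..n. eta * (real m - real i) - gamma) = (\<Sum>i=1..n. (eta * real m - gamma) - eta * real i)"
        by (simp add: algebra_simps)
      also have "\<dots> = (\<Sum>i=1..n. eta * real m - gamma) - (\<Sum>i=1..n. eta * real i)" by (rule sum_subtractf)
      also have "(\<Sum>i=1..n. eta * real i) = eta * (\<Sum>i=1..n. real i)" by (rule sum_distrib_left[symmetric])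
      finally have "(\<Sum>i=1..n. eta * (real m - real i) - gamma) = (\<Sum>i=1..n. eta * real m - gamma) - eta * (\<Sum>i=1..n. real i)" .
      then show ?thesis by (simp add: gauss_real gauss_real2 algebra_simps)
    qed
    show ?thesis unfolding h1 h2 h3 ..
  qed
  finally have eq2: "(\<Sum>t=1..T. F t) = \<dots>" .
  have ng: "real n * gamma \<le> real n * (real tau * eta)" using g1 by (simp add: mult_left_mono)
  have k1: "gamma * (real n * 16) \<le> eta * (real n * (real tau * 16))" using ng by (simp add: algebra_simps)
  have k2: "0 \<le> gamma * (real tau * 8)" using g0 by simp
  have k3: "0 \<le> eta * (real tau * 4)" using eta by simp
  have k4: "0 \<le> eta * (real tau * (real tau * 4))" using eta by simp
  have "(\<Sum>t=1..T. F t) \<ge> eta * real m"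
    unfolding eq2 mn apply (simp add: field_simps) using k1 k2 k3 k4 g0 by linarith
  then show ?thesis by (simp add: F_def)
qed

lemma learnB:
  assumes k: "1 \<le> k" "k \<le> T" and c: "c \<ge> 0" and eta: "eta > 0"
    and g0: "0 \<le> gamma" and g1: "gamma \<le> real tau * eta"
  shows "(\<Sum>t=1..T. seqB c k t * (- (eta * (\<Sum>s=1..t-tau-1. seqB c k s)) - gamma * delayed_grad (seqB c k) tau t))
          \<ge> - ((real tau + 1) * eta * c\<^sup>2 * real k) * real k"
proof -
  define F where "F t = seqB c k t * (- (eta * (\<Sum>s=1..t-tau-1. seqB c k s)) - gamma * delayed_grad (seqB c k) tau t)" for t
  have pw: "F t \<ge> (if 0 < t \<and> t \<le> k then - ((real tau + 1) * eta * c\<^sup>2 * real k) else 0)" for t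
  proof (cases "t \<le> k")
    case True
    define j where "j = t - tau - 1"
    define d where "d = delayed_grad (seqB c k) tau t"
    have jk: "real j \<le> real k" using True by (simp add: j_def)
    have S: "(\<Sum>s=1..t-tau-1. seqB c k s) = c * real j" unfolding j_def using True by (intro psB) simp
    have d0: "0 \<le> d" "d \<le> c" using c True by (auto simp: d_def delayed_grad_def seqB_def)
    have Fe: "F t = - (eta * c\<^sup>2 * real j) - gamma * c * d"
      unfolding F_def S d_def[symmetric] using True by (simp add: seqB_def power2_eq_square algebra_simps)
    have i1: "eta * c\<^sup>2 * real j \<le> eta * c\<^sup>2 * real k" using jk eta by (intro mult_left_mono) auto
    have i2: "gamma * c * d \<le> (real tau * eta) * c * c"
      using g0 g1 c d0 by (intro mult_mono) auto
    have i3: "(real tau * eta) * c * c \<le> (real tau * eta * c\<^sup>2) * real k"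
    proof -
      have x0: "0 \<le> real tau * eta * c\<^sup>2" using eta by simp
      have "(real tau*eta*c\<^sup>2) * 1 \<le> (real tau*eta*c\<^sup>2) * real k" using x0 k by (intro mult_left_mono) auto
      then show ?thesis by (simp add: power2_eq_square algebra_simps)
    qed
    have "F t \<ge> - ((real tau + 1) * eta * c\<^sup>2 * real k)"
      unfolding Fe using i1 i2 i3 by (simp add: algebra_simps)
    then show ?thesis using True by (cases "t = 0") (auto simp: F_def delayed_grad_def)
  next
    case False
    then show ?thesis by (simp add: F_def seqB_def)
  qed
  have "(\<Sum>t=1..T. F t) \<ge> (\<Sum>t=1..T. if 0 < t \<and> t \<le> k then - ((real tau + 1) * eta * c\<^sup>2 * real k) else 0)"
    by (rule sum_mono) (rule pw)
  also have "(\<Sum>t=1..T. if 0 < t \<and> t \<le> k then - ((real tau + 1) * eta * c\<^sup>2 * real k) else 0)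
      = - ((real tau + 1) * eta * c\<^sup>2 * real k) * real (k - 0)"
    by (rule ind_sum) (use k in auto)
  finally show ?thesis by (simp add: F_def)
qed

lemma sumA: "2 * m \<le> T \<Longrightarrow> (\<Sum>t=1..T. seqA m t) = 0"
proof -
  assume T: "2 * m \<le> T"
  have "(\<Sum>t=1..T. seqA m t) = (\<Sum>t=1..T. (if 0 < t \<and> t \<le> m then 1 else 0) + (if m < t \<and> t \<le> m + m then -1 else 0))"
    by (rule sum.cong) (auto simp: seqA_def)
  also have "\<dots> = 0" unfolding sum.distrib using T by (subst ind_sum ind_sum, simp, simp)+ simp
  finally show ?thesis .
qed

lemma sumB: "k \<le> T \<Longrightarrow> (\<Sum>t=1..T. seqB c k t) = c * real k"
proof -
  assume T: "k \<le> T"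
  have "(\<Sum>t=1..T. seqB c k t) = (\<Sum>t=1..T. if 0 < t \<and> t \<le> k then c else 0)"
    by (rule sum.cong) (auto simp: seqB_def)
  also have "\<dots> = c * real (k - 0)" using T by (intro ind_sum) auto
  finally show ?thesis by simp
qed

lemma frac_aux1: "(Y::real) > 0 \<Longrightarrow> Y / (12 * (real t + 1)) < Y / (6 * (real t + 1))"
  by (rule divide_strict_left_mono) (auto simp: mult_pos_pos)

lemma frac_aux2: "(Y::real) > 0 \<Longrightarrow> Y / (12 * (real t + 1)) < Y / 2"
  by (rule divide_strict_left_mono) (auto simp: mult_pos_pos)

theorem theorem6:
  fixes r :: real and tau :: nat
    and eta gamma :: "real \<Rightarrow> nat \<Rightarrow> nat \<Rightarrow> real \<Rightarrow> real"
  assumes r_pos: "r > 0"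
    and eta_pos: "\<forall>T V. eta r T tau V > 0"
    and gamma_bnd: "\<forall>T V. 0 \<le> gamma r T tau V \<and> gamma r T tau V \<le> real tau * eta r T tau V"
  shows "\<not> (\<forall>\<epsilon>>0. \<exists>N::real. \<forall>(T::nat) (g :: nat \<Rightarrow> real^'d) (x1 :: real^'d) (p :: real^'d).
            T \<ge> 1 \<longrightarrow> norm (p - x1) \<le> r \<longrightarrow>
            max (variation g tau T) (sqrt (real T)) \<ge> N \<longrightarrow>
            doda_regret (eta r T tau (variation g tau T)) (gamma r T tau (variation g tau T))
                        g x1 tau T p
              \<le> \<epsilon> * max (variation g tau T) (sqrt (real T)))"
proof
  assume H: "\<forall>\<epsilon>>0. \<exists>N::real. \<forall>(T::nat) (g :: nat \<Rightarrow> real^'d) (x1 :: real^'d) (p :: real^'d).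
            T \<ge> 1 \<longrightarrow> norm (p - x1) \<le> r \<longrightarrow>
            max (variation g tau T) (sqrt (real T)) \<ge> N \<longrightarrow>
            doda_regret (eta r T tau (variation g tau T)) (gamma r T tau (variation g tau T))
                        g x1 tau T p
              \<le> \<epsilon> * max (variation g tau T) (sqrt (real T))"
  define eps0 where "eps0 = r / (24 * (real tau + 1))"
  have eps0: "eps0 > 0" using r_pos by (simp add: eps0_def)
  obtain N :: real where HN: "\<And>T (g :: nat \<Rightarrow> real^'d) (x1 :: real^'d) (p :: real^'d).
            T \<ge> 1 \<Longrightarrow> norm (p - x1) \<le> r \<Longrightarrow>
            max (variation g tau T) (sqrt (real T)) \<ge> N \<Longrightarrow>
            doda_regret (eta r T tau (variation g tau T)) (gamma r T tau (variation g tau T))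
                        g x1 tau T p
              \<le> eps0 * max (variation g tau T) (sqrt (real T))"
    using H eps0 by blast
  define q :: nat where "q = nat \<lceil>N\<rceil> + 6 * (tau + 1)"
  have q1: "tau + 1 \<le> q" "1 \<le> q" "6 * (tau + 1) \<le> q" by (auto simp: q_def)
  have qN: "N \<le> 2 * real q"
  proof -
    have "N \<le> real (nat \<lceil>N\<rceil>)" by linarith
    then show ?thesis unfolding q_def by simp
  qed
  have qq: "q \<le> q * q" using q1 by simp
  define T :: nat where "T = 4 * (q * q)"
  have T1: "1 \<le> T" using q1 qq by (simp add: T_def)
  have sqrtT: "sqrt (real T) = 2 * real q"
  proof -
    have "real T = (2 * real q)\<^sup>2" by (simp add: T_def power2_eq_square)
    then have "sqrt (real T) = \<bar>2 * real q\<bar>" by (metis real_sqrt_abs)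
    then show ?thesis by simp
  qed
  define V where "V = 6 * (real tau + 1)"
  have VM: "max V (sqrt (real T)) = 2 * real q"
  proof -
    have "V \<le> 2 * real q" using q1(3) unfolding V_def by (simp add: of_nat_mono) linarith?
    then show ?thesis unfolding sqrtT by simp
  qed
  have MN: "N \<le> max V (sqrt (real T))" using VM qN by simp
  define eta0 where "eta0 = eta r T tau V"
  define gamma0 where "gamma0 = gamma r T tau V"
  have eta0: "eta0 > 0" using eta_pos by (simp add: eta0_def)
  have gam0: "0 \<le> gamma0" "gamma0 \<le> real tau * eta0" using gamma_bnd by (auto simp: gamma0_def eta0_def)
  define e :: "real^'d" where "e = axis undefined 1"
  have ne: "norm e = 1" by (simp add: e_def)
  have ee: "e \<bullet> e = 1" using ne by (simp add: power2_norm_eq_inner[symmetric])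
  have rq: "0 < r * real q" using r_pos q1 by simp
  show False
  proof (cases "eta0 \<ge> r / (6 * (real tau + 1) * real q)")
    case True
    define m where "m = q * q"
    have "tau + 1 \<le> m" using q1(1) qq unfolding m_def by linarith
    then obtain n where "m = tau + 1 + n" using le_Suc_ex by blast
    then have mn: "m = n + tau + 1" by simp
    have mT: "2 * m \<le> T" "2 * m + tau + 1 \<le> T" unfolding m_def T_def using q1 qq by linarith+
    define g where "g = (\<lambda>t. seqA m t *\<^sub>R e)"
    have Vg: "variation g tau T = V"
      unfolding g_def scalar_variation[OF ne] V_def using mn mT by (intro varA) auto
    have reg: "doda_regret eta0 gamma0 g 0 tau T 0 \<ge> eta0 * real m"
    proof -
      have "doda_regret eta0 gamma0 g 0 tau T 0 = doda_regret eta0 gamma0 g 0 tau T (- (0 *\<^sub>R e))" by simp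
      also have "\<dots> = (\<Sum>t=1..T. seqA m t * (- (eta0 * (\<Sum>s=1..t-tau-1. seqA m s)) - gamma0 * delayed_grad (seqA m) tau t))"
        unfolding g_def scalar_regret[OF ee] by simp
      finally show ?thesis using learnA[OF mn mT(1) eta0 gam0] by simp
    qed
    have "doda_regret eta0 gamma0 g 0 tau T 0 \<le> eps0 * (2 * real q)"
      using HN[of T 0 0 g] T1 r_pos MN VM unfolding Vg eta0_def gamma0_def by simp
    with reg have A: "eta0 * real m \<le> eps0 * (2 * real q)" by simp
    have B: "eta0 * real m \<ge> r / (6 * (real tau + 1) * real q) * real m"
      using True by (intro mult_right_mono) auto
    have "r / (6 * (real tau + 1) * real q) * real m = r * real q / (6 * (real tau + 1))"
    proof -
      have qp: "real q > 0" using q1 by simp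
      have gen: "\<And>X::real. X > 0 \<Longrightarrow> r / (X * real q) * (real q * real q) = r * real q / X"
        using qp by (simp add: field_simps)
      show ?thesis unfolding m_def of_nat_mult by (rule gen) simp
    qed
    moreover have "eps0 * (2 * real q) = r * real q / (12 * (real tau + 1))"
      by (simp add: eps0_def field_simps)
    moreover have "r * real q / (12 * (real tau + 1)) < r * real q / (6 * (real tau + 1))"
      using rq by (rule frac_aux1)
    ultimately show False using A B by linarith
  next
    case False
    define c where "c = sqrt 3"
    have c: "c \<ge> 0" "c\<^sup>2 = 3" "c \<ge> 1" by (auto simp: c_def)
    define g where "g = (\<lambda>t. seqB c q t *\<^sub>R e)"
    have kT: "q \<le> T" "q + tau + 1 \<le> T" unfolding T_def using q1 qq by linarith+
    have Vg: "variation g tau T = V"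
      unfolding g_def scalar_variation[OF ne] V_def using q1 kT by (subst varB) (auto simp: c)
    have reg: "doda_regret eta0 gamma0 g 0 tau T (- (r *\<^sub>R e)) \<ge>
        - ((real tau + 1) * eta0 * c\<^sup>2 * real q) * real q + r * (c * real q)"
    proof -
      have "doda_regret eta0 gamma0 g 0 tau T (- (r *\<^sub>R e)) = (\<Sum>t=1..T. seqB c q t * (- (eta0 * (\<Sum>s=1..t-tau-1. seqB c q s)) - gamma0 * delayed_grad (seqB c q) tau t)) + r * (c * real q)"
        unfolding g_def scalar_regret[OF ee] sumB[OF kT(1)] by simp
      then show ?thesis using learnB[OF q1(2) kT(1) c(1) eta0 gam0] by simp
    qed
    have "doda_regret eta0 gamma0 g 0 tau T (- (r *\<^sub>R e)) \<le> eps0 * (2 * real q)"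
      using HN[of T "- (r *\<^sub>R e)" 0 g] T1 r_pos ne MN VM unfolding Vg eta0_def gamma0_def by simp
    with reg have A: "- ((real tau + 1) * eta0 * c\<^sup>2 * real q) * real q + r * (c * real q) \<le> eps0 * (2 * real q)"
      by simp
    have lt: "eta0 * (6 * (real tau + 1) * real q) < r"
    proof -
      have D: "0 < 6 * (real tau + 1) * real q" using q1 by simp
      have "eta0 < r / (6 * (real tau + 1) * real q)" using False by simp
      then show ?thesis using pos_less_divide_eq[OF D] by simp
    qed
    have B: "(real tau + 1) * eta0 * c\<^sup>2 * real q * real q = (eta0 * (6 * (real tau + 1) * real q)) * real q / 2"
      by (simp add: c(2) field_simps)
    have B2: "(eta0 * (6 * (real tau + 1) * real q)) * real q / 2 < r * real q / 2"
    proof -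
      have "(eta0 * (6 * (real tau + 1) * real q)) * real q < r * real q"
        by (rule mult_strict_right_mono[OF lt]) (use q1 in simp)
      then show ?thesis by linarith
    qed
    have C: "r * (c * real q) \<ge> r * real q" using c r_pos q1 by simp
    have D: "eps0 * (2 * real q) = r * real q / (12 * (real tau + 1))"
      by (simp add: eps0_def field_simps)
    have E: "r * real q / (12 * (real tau + 1)) < r * real q / 2"
      using rq by (rule frac_aux2)
    have A': "- ((real tau + 1) * eta0 * c\<^sup>2 * real q * real q) + r * (c * real q) \<le> eps0 * (2 * real q)"
      using A by (simp only: mult_minus_left)
    show False using A' B B2 C D E by linarith
  qed
qed

end
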